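(* Let $P_c$ be the program defined in the context, for an arbitrary ordering $\alpha$ of $X$. For every supported model $M$ of $P_c$, the digraph on $X$ with arc set $\{(p,q):\mathrm{dep}(p,q)\in M\}$ contains no directed cycle, including cycles of length $1$.
   Context: Delete-relaxed planning. Let $X$ be a finite set of atomic propositions, $A^+$ a finite set of actions, and $G\subseteq X$. Each action $\vec a\in A^+$ has $pre(\vec a),add(\vec a)\subseteq X$; there are no delete effects and the initial state is $\emptyset$. For each action $\vec a$ there is an action atom $a$. Further atoms are: - $\mathrm{dep}(p,q)$ for $p,q\in X$; - $\mathrm{ws}(a,p)$ for actions $\vec a$ and $p\in X$; - a special atom $f$. All these atoms are pairwise distinct and distinct from $X$. Logic programs. A normal rule has the form $h\leftarrow b_1,\dots,b_n,\mathtt{not}\,c_1,\dots,\mathtt{not}\,c_m$, and a choice rule has the form $\{h\}\leftarrow(\text{same body})$. An interpretation $I$ satisfies a body if all $b_i\in I$ and no $c_j\in I$. $I$ is a model if every normal rule whose body $I$ satisfies has its head in $I$. The supporting rules of $P$ w.r.t. $I$ are: - the normal rules whose body $I$ satisfies; - the choice rules whose body $I$ satisfies and whose head is in $I$. A model $I$ of $P$ is supported if $I$ is exactly the set of heads of its supporting rules. Vertex elimination. For a digraph $(V',E')$ and vertex $v$: - the fill-in is $F(v)=\{(x,y):(x,v),(v,y)\in E',x\ne y\}$; - the $v$-elimination graph deletes $v$ together with its incident arcs and adds $F(v)$. For an ordering $\alpha:\{1,\dots,n\}\to V$ of a digraph $\mathcal{G}$ with $n$ vertices, set $\mathcal{G}_0=\mathcal{G}$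 and let $\mathcal{G}_i$ be the $\alpha(i)$-elimination graph of $\mathcal{G}_{i-1}$ for $i=1,\dots,n-1$. Let $F_{i-1}(\alpha(i))$ be the fill-in of $\alpha(i)$ in $\mathcal{G}_{i-1}$. The vertex elimination graph is $\mathcal{G}^*_\alpha=(V,E^* )$, where $E^*$ is the union of the original arcs and all $F_{i-1}(\alpha(i))$. Program $P_c$. Let $E=\{(p,q)\in X\times X:\exists \vec a\in A^+,\ p\in add(\vec a),\ q\in pre(\vec a)\}$ and $\mathcal{G}=(X,E)$. Let $n=|X|$, fix an ordering $\alpha$ of $X$, and let $E^*$ be the arc set of $\mathcal{G}^*_\alpha$. $P_c$ consists of: - (C1) $\{\mathrm{dep}(p,q)\}\leftarrow q$ for each $(p,q)\in E$; - (C2) $\{\mathrm{ws}(a,p)\}\leftarrow \mathrm{dep}(p,q_1),\dots,\mathrm{dep}(p,q_k)$ for each $\vec a\in A^+$ and $p\in add(\vec a)$, where $pre(\vec a)=\{q_1,\dots,q_k\}$; - (C3) $p\leftarrow \mathrm{ws}(a,p)$ and $a\leftarrow\mathrm{ws}(a,p)$ for each $\vec a\in A^+$ and $p\in add(\vec a)$; - (C4) $g\leftarrow\mathtt{not}\,g$ for each $g\in G$; - (C5) $\mathrm{dep}(p,q)\leftarrow\mathrm{dep}(p,\alpha(i)),\mathrm{dep}(\alpha(i),q)$ for each $i\in\{1,\dots,n-1\}$ and each $(p,q)\in F_{i-1}(\alpha(i))$; - (C6) $f\leftarrow \mathrm{dep}(p,q),\mathrm{dep}(q,p),\mathtt{not}\,f$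 for all $p,q\in X$ (possibly $p=q$) with $(p,q)\in E^*$ and $(q,p)\in E^*$. *)

theory Defs
  imports Main
begin

datatype ('x, 'a) atom =
    Prop 'x
  | Act 'a
  | Dep 'x 'x
  | WS 'a 'x
  | FAtom

datatype 'at rule =
    Normal 'at "'at set" "'at set"
  | Choice 'at "'at set" "'at set"

definition sat_body :: "'at set \<Rightarrow> 'at set \<Rightarrow> 'at set \<Rightarrow> bool" where
  "sat_body I pos neg \<longleftrightarrow> pos \<subseteq> I \<and> neg \<inter> I = {}"

definition is_model :: "'at rule set \<Rightarrow> 'at set \<Rightarrow> bool" where
  "is_model P I \<longleftrightarrow> (\<forall>h pos neg. Normal h pos neg \<in> P \<longrightarrow> sat_body I pos neg \<longrightarrow> h \<in> I)"

definition supporting_rules :: "'at rule set \<Rightarrow> 'at set \<Rightarrow> 'at rule set" where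
  "supporting_rules P I =
     {r \<in> P. (\<exists>h pos neg. r = Normal h pos neg \<and> sat_body I pos neg)
           \<or> (\<exists>h pos neg. r = Choice h pos neg \<and> sat_body I pos neg \<and> h \<in> I)}"

fun rule_head :: "'at rule \<Rightarrow> 'at" where
  "rule_head (Normal h _ _) = h"
| "rule_head (Choice h _ _) = h"

definition supported_model :: "'at rule set \<Rightarrow> 'at set \<Rightarrow> bool" where
  "supported_model P I \<longleftrightarrow> is_model P I \<and> I = rule_head ` supporting_rules P I"

definition fill_in :: "('v \<times> 'v) set \<Rightarrow> 'v \<Rightarrow> ('v \<times> 'v) set" where
  "fill_in E' v = {(x, y). (x, v) \<in> E' \<and> (v, y) \<in> E' \<and> x \<noteq> y}"

definition elim_arcs :: "('v \<times> 'v) set \<Rightarrow> 'v \<Rightarrow> ('v \<times> 'v) set" where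
  "elim_arcs E' v = {(x, y). (x, y) \<in> E' \<union> fill_in E' v \<and> x \<noteq> v \<and> y \<noteq> v}"

text \<open>The ordering alpha is a list ord with alpha(i) = ord ! (i-1).
  elim_seq E ord k is the arc set of G_k.\<close>
definition elim_seq :: "('v \<times> 'v) set \<Rightarrow> 'v list \<Rightarrow> nat \<Rightarrow> ('v \<times> 'v) set" where
  "elim_seq E ord k = foldl elim_arcs E (take k ord)"

text \<open>Fill-in F_{k}(alpha(k+1)) of alpha(k+1) in G_k, for k = 0..n-2.\<close>
definition step_fill :: "('v \<times> 'v) set \<Rightarrow> 'v list \<Rightarrow> nat \<Rightarrow> ('v \<times> 'v) set" where
  "step_fill E ord k = fill_in (elim_seq E ord k) (ord ! k)"

definition elim_graph_arcs :: "('v \<times> 'v) set \<Rightarrow> 'v list \<Rightarrow> ('v \<times> 'v) set" where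
  "elim_graph_arcs E ord = E \<union> (\<Union>k < length ord - 1. step_fill E ord k)"

definition dep_graph :: "'a set \<Rightarrow> ('a \<Rightarrow> 'x set) \<Rightarrow> ('a \<Rightarrow> 'x set) \<Rightarrow> ('x \<times> 'x) set" where
  "dep_graph A pre add = {(p, q). \<exists>a\<in>A. p \<in> add a \<and> q \<in> pre a}"

definition Pc :: "'x set \<Rightarrow> 'a set \<Rightarrow> ('a \<Rightarrow> 'x set) \<Rightarrow> ('a \<Rightarrow> 'x set) \<Rightarrow> 'x set
                   \<Rightarrow> 'x list \<Rightarrow> ('x, 'a) atom rule set" where
  "Pc X A pre add G ord =
    (let E = dep_graph A pre add; Es = elim_graph_arcs E ord; n = length ord in
      {Choice (Dep p q) {Prop q} {} | p q. (p, q) \<in> E}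
    \<union> {Choice (WS a p) (Dep p ` pre a) {} | a p. a \<in> A \<and> p \<in> add a}
    \<union> {Normal (Prop p) {WS a p} {} | a p. a \<in> A \<and> p \<in> add a}
    \<union> {Normal (Act a) {WS a p} {} | a p. a \<in> A \<and> p \<in> add a}
    \<union> {Normal (Prop g) {} {Prop g} | g. g \<in> G}
    \<union> {Normal (Dep p q) {Dep p (ord ! k), Dep (ord ! k) q} {} | k p q.
          k < n - 1 \<and> (p, q) \<in> step_fill E ord k}
    \<union> {Normal FAtom {Dep p q, Dep q p} {FAtom} | p q.
          p \<in> X \<and> q \<in> X \<and> (p, q) \<in> Es \<and> (q, p) \<in> Es})"

end

theory Submission imports Defs begin

lemma succ_split: "successively P (xs @ m # ys) \<longleftrightarrow> successively P (xs @ [m]) \<and> successively P (m # ys)"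
proof (induction xs)
  case Nil then show ?case by (cases ys) auto
next
  case (Cons a xs) then show ?case by (cases xs) auto
qed

lemma sD1: "successively P (xs @ m # ys) \<Longrightarrow> successively P (xs @ [m])" using succ_split by metis
lemma sD2: "successively P (xs @ m # ys) \<Longrightarrow> successively P (m # ys)" using succ_split by metis
lemma sJ: "successively P (xs @ [m]) \<Longrightarrow> successively P (m # ys) \<Longrightarrow> successively P (xs @ m # ys)" using succ_split by metis

lemma chain_claim:
  fixes R :: "('x \<times> 'x) set" and pos :: "'x \<Rightarrow> nat"
  assumes inj: "inj_on pos V"
    and no2: "\<And>x y. (x,y)\<in>R \<Longrightarrow> (y,x)\<in>R \<Longrightarrow> False"
    and sc: "\<And>x v y. (x,v)\<in>R \<Longrightarrow> (v,y)\<in>R \<Longrightarrow> x\<noteq>y \<Longrightarrow> pos v < pos x \<Longrightarrow> pos v < pos y \<Longrightarrow> (x,y)\<in>R"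
  shows "successively (\<lambda>a b. (a,b)\<in>R) (x # zs @ [y]) \<Longrightarrow> set (x # zs @ [y]) \<subseteq> V
     \<Longrightarrow> \<forall>z\<in>set zs. pos z < pos x \<and> pos z < pos y \<Longrightarrow> (x,y)\<in>R"
proof (induction "length zs" arbitrary: x y zs rule: less_induct)
  case less
  show ?case
  proof (cases "zs = []")
    case True then show ?thesis using less.prems by simp
  next
    case False
    have fin: "finite (pos ` set zs)" "pos ` set zs \<noteq> {}" using False by auto
    have "Max (pos ` set zs) \<in> pos ` set zs" using Max_in[OF fin] .
    then obtain v where v: "v \<in> set zs" "pos v = Max (pos ` set zs)" by (metis imageE)
    have vmin: "\<And>z. z \<in> set zs \<Longrightarrow> pos z \<le> pos v" using v(2) Max_ge[OF fin(1)] by auto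
    have zV: "set zs \<subseteq> V" using less.prems(2) by auto
    have vlt: "\<And>z. z \<in> set zs \<Longrightarrow> z \<noteq> v \<Longrightarrow> pos z < pos v"
      using vmin inj v(1) zV by (metis inj_onD le_neq_implies_less subsetD)
    obtain as r where as: "zs = as @ v # r" "v \<notin> set as" using split_list_first[OF v(1)] by blast
    obtain bs r' where bs: "zs = r' @ v # bs" "v \<notin> set bs" using split_list_last[OF v(1)] by blast
    have xv: "(x,v)\<in>R"
    proof (rule less.hyps[of as])
      show "length as < length zs" using as by simp
      have "successively (\<lambda>a b. (a,b)\<in>R) ((x # as) @ v # (r @ [y]))" using less.prems(1) as by simp
      then show "successively (\<lambda>a b. (a,b)\<in>R) (x # as @ [v])" using sD1 by fastforce
      show "set (x # as @ [v]) \<subseteq> V" using less.prems(2) as by auto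
      show "\<forall>z\<in>set as. pos z < pos x \<and> pos z < pos v" using less.prems(3) as vlt by auto
    qed
    have vy: "(v,y)\<in>R"
    proof (rule less.hyps[of bs])
      show "length bs < length zs" using bs by simp
      have "successively (\<lambda>a b. (a,b)\<in>R) ((x # r') @ v # (bs @ [y]))" using less.prems(1) bs by simp
      then show "successively (\<lambda>a b. (a,b)\<in>R) (v # bs @ [y])" by (rule sD2)
      show "set (v # bs @ [y]) \<subseteq> V" using less.prems(2) bs by auto
      show "\<forall>z\<in>set bs. pos z < pos v \<and> pos z < pos y" using less.prems(3) bs vlt by auto
    qed
    have "x \<noteq> y" using xv vy no2 by blast
    then show ?thesis using sc[OF xv vy] less.prems(3) v(1) by auto
  qed
qed

lemma trancl_list:
  assumes "R \<subseteq> V \<times> V" "(a,b) \<in> R\<^sup>+"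
  shows "\<exists>zs. successively (\<lambda>a b. (a,b)\<in>R) (a # zs @ [b]) \<and> set (a # zs @ [b]) \<subseteq> V"
  using assms(2)
proof (induction rule: trancl_induct)
  case (base y)
  then show ?case using assms(1) by (intro exI[of _ "[]"]) auto
next
  case (step y z)
  then obtain zs where zs: "successively (\<lambda>a b. (a,b)\<in>R) (a # zs @ [y])" "set (a # zs @ [y]) \<subseteq> V" by blast
  have "successively (\<lambda>a b. (a,b)\<in>R) ((a # zs) @ y # [z])"
    by (rule sJ) (use zs step(2) in simp_all)
  then show ?case using zs step(2) assms(1) by (intro exI[of _ "zs @ [y]"]) auto
qed

lemma acyclic_abs:
  fixes R :: "('x \<times> 'x) set" and pos :: "'x \<Rightarrow> nat"
  assumes RV: "R \<subseteq> V \<times> V" and inj: "inj_on pos V"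
    and irr: "\<And>x. (x,x) \<notin> R"
    and no2: "\<And>x y. (x,y)\<in>R \<Longrightarrow> (y,x)\<in>R \<Longrightarrow> False"
    and sc: "\<And>x v y. (x,v)\<in>R \<Longrightarrow> (v,y)\<in>R \<Longrightarrow> x\<noteq>y \<Longrightarrow> pos v < pos x \<Longrightarrow> pos v < pos y \<Longrightarrow> (x,y)\<in>R"
  shows "acyclic R"
  unfolding acyclic_def
proof (intro allI notI)
  fix p assume "(p,p) \<in> R\<^sup>+"
  then obtain zs where zs: "successively (\<lambda>a b. (a,b)\<in>R) (p # zs @ [p])" "set (p # zs @ [p]) \<subseteq> V"
    using trancl_list[OF RV] by blast
  let ?S = "set (p # zs)"
  have fin: "finite (pos ` ?S)" "pos ` ?S \<noteq> {}" by auto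
  have "Max (pos ` ?S) \<in> pos ` ?S" using Max_in[OF fin] .
  then obtain w where w: "w \<in> ?S" "pos w = Max (pos ` ?S)" by (metis imageE)
  have wmax: "\<And>z. z \<in> ?S \<Longrightarrow> pos z \<le> pos w" using w(2) Max_ge[OF fin(1)] by auto
  obtain ys where ys: "successively (\<lambda>a b. (a,b)\<in>R) (w # ys @ [w])" "set ys \<subseteq> ?S"
  proof (cases "w = p")
    case True then show ?thesis using that zs by auto
  next
    case False
    then have "w \<in> set zs" using w by auto
    then obtain as bs where ab: "zs = as @ w # bs" by (meson split_list)
    have "successively (\<lambda>a b. (a,b)\<in>R) ((p # as) @ w # (bs @ [p]))" using zs ab by simp
    then have s1: "successively (\<lambda>a b. (a,b)\<in>R) (p # as @ [w])" 
      and s2: "successively (\<lambda>a b. (a,b)\<in>R) (w # bs @ [p])" using sD1 sD2 by fastforce+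
    have "successively (\<lambda>a b. (a,b)\<in>R) ((w # bs) @ p # (as @ [w]))"
      by (rule sJ) (use s1 s2 in simp_all)
    then show ?thesis using that[of "bs @ p # as"] ab by auto
  qed
  have "w \<in> set (ys @ [w])" by simp
  then obtain cs ds where cd: "ys @ [w] = cs @ w # ds" "w \<notin> set cs" using split_list_first by metis
  have "successively (\<lambda>a b. (a,b)\<in>R) ((w # cs) @ w # ds)" using ys(1) cd by (metis append_Cons)
  then have sc1: "successively (\<lambda>a b. (a,b)\<in>R) (w # cs @ [w])" using sD1 by fastforce
  have csS: "set cs \<subseteq> ?S"
  proof -
    have "set cs \<subseteq> set (ys @ [w])" using cd by auto
    then show ?thesis using ys(2) w(1) by auto
  qed
  have SV: "?S \<subseteq> V" using zs(2) by auto
  have "(w,w) \<in> R"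
  proof (rule chain_claim[OF inj no2 sc sc1])
    show "set (w # cs @ [w]) \<subseteq> V" using csS SV w(1) by auto
    show "\<forall>z\<in>set cs. pos z < pos w \<and> pos z < pos w"
    proof
      fix z assume z: "z \<in> set cs"
      then have "z \<noteq> w" using cd(2) by auto
      moreover have "pos z \<le> pos w" using wmax csS z by auto
      moreover have "pos z \<noteq> pos w" using inj \<open>z \<noteq> w\<close> z csS SV w(1) by (meson inj_onD subsetD)
      ultimately show "pos z < pos w \<and> pos z < pos w" by simp
    qed
  qed
  then show False using irr by blast
qed

lemma elim_seq_Suc: "j < length ord \<Longrightarrow> elim_seq E ord (Suc j) = elim_arcs (elim_seq E ord j) (ord ! j)"
  unfolding elim_seq_def by (simp add: take_Suc_conv_app_nth)

lemma elim_seq_0: "elim_seq E ord 0 = E" unfolding elim_seq_def by simp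

lemma nth_in_drop: "distinct ord \<Longrightarrow> i < length ord \<Longrightarrow> ord ! i \<in> set (drop j ord) \<longleftrightarrow> j \<le> i"
proof
  assume d: "distinct ord" and i: "i < length ord" and m: "ord ! i \<in> set (drop j ord)"
  then obtain l where l: "l < length (drop j ord)" "drop j ord ! l = ord ! i" by (metis in_set_conv_nth)
  then have "ord ! (j + l) = ord ! i" "j + l < length ord" by auto
  then have "j + l = i" using d i nth_eq_iff_index_eq by blast
  then show "j \<le> i" by simp
next
  assume "distinct ord" "i < length ord" "j \<le> i"
  then show "ord ! i \<in> set (drop j ord)"
    using nth_mem[of "i-j" "drop j ord"] by simp
qed

lemma L1:
  assumes "E \<subseteq> set ord \<times> set ord" "distinct ord"
  shows "j \<le> length ord \<Longrightarrow> elim_seq E ord j \<subseteq> set (drop j ord) \<times> set (drop j ord)"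
proof (induction j)
  case 0 then show ?case using assms by (simp add: elim_seq_0)
next
  case (Suc j)
  then have j: "j < length ord" by simp
  have dj: "set (drop j ord) = insert (ord ! j) (set (drop (Suc j) ord))"
    using Cons_nth_drop_Suc[OF j] by (metis list.simps(15))
  show ?case using Suc j dj unfolding elim_seq_Suc[OF j] elim_arcs_def fill_in_def by auto
qed

lemma L2:
  assumes "distinct ord"
  shows "i \<le> j \<Longrightarrow> j \<le> length ord \<Longrightarrow> (a,b) \<in> elim_seq E ord i \<Longrightarrow> a \<in> set (drop j ord)
     \<Longrightarrow> b \<in> set (drop j ord) \<Longrightarrow> (a,b) \<in> elim_seq E ord j"
proof (induction j)
  case 0 then show ?case by simp
next
  case (Suc j)
  show ?case
  proof (cases "i = Suc j")
    case True then show ?thesis using Suc by simp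
  next
    case False
    then have j: "j < length ord" "i \<le> j" using Suc by auto
    have sub: "set (drop (Suc j) ord) \<subseteq> set (drop j ord)" by (simp add: set_drop_subset_set_drop)
    have G: "(a,b) \<in> elim_seq E ord j" using Suc j sub by auto
    have "ord ! j \<notin> set (drop (Suc j) ord)" using nth_in_drop[OF assms j(1)] by simp
    then have "a \<noteq> ord ! j" "b \<noteq> ord ! j" using Suc by auto
    then show ?thesis using G unfolding elim_seq_Suc[OF j(1)] elim_arcs_def by auto
  qed
qed

lemma key:
  assumes E: "E \<subseteq> set ord \<times> set ord" and d: "distinct ord" and k: "k < length ord"
    and ab: "(a,b) \<in> elim_graph_arcs E ord" and a: "a \<in> set (drop k ord)" and b: "b \<in> set (drop k ord)"
    and ak: "a = ord ! k \<or> b = ord ! k"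
  shows "(a,b) \<in> elim_seq E ord k"
proof -
  from ab consider "(a,b) \<in> E" | j where "j < length ord - 1" "(a,b) \<in> step_fill E ord j"
    unfolding elim_graph_arcs_def by auto
  then show ?thesis
  proof cases
    case 1
    then show ?thesis using L2[OF d, of 0 k a b E] k a b by (simp add: elim_seq_0)
  next
    case (2 j)
    note sf = 2(2)
    from 2 have jl: "j < length ord" by simp
    consider "j < k" | "j = k" | "k < j" by linarith
    then show ?thesis
    proof cases
      case 1
      have "set (drop k ord) \<subseteq> set (drop (Suc j) ord)" using 1 by (simp add: set_drop_subset_set_drop)
      moreover have "ord ! j \<notin> set (drop (Suc j) ord)" using nth_in_drop[OF d jl] by simp
      ultimately have ne: "a \<noteq> ord ! j" "b \<noteq> ord ! j" using a b by auto
      have "(a,b) \<in> elim_seq E ord (Suc j)"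
        using sf ne unfolding elim_seq_Suc[OF jl] step_fill_def elim_arcs_def by auto
      then show ?thesis using L2[OF d, of "Suc j" k a b E] 1 k a b by simp
    next
      case 2
      then show ?thesis using sf ak unfolding step_fill_def fill_in_def by auto
    next
      case 3
      have "step_fill E ord j \<subseteq> set (drop j ord) \<times> set (drop j ord)"
        using L1[OF E d, of j] jl unfolding step_fill_def fill_in_def by auto
      then have "a \<in> set (drop j ord)" "b \<in> set (drop j ord)" using sf by auto
      moreover have "ord ! k \<notin> set (drop j ord)" using nth_in_drop[OF d k] 3 by simp
      ultimately show ?thesis using ak by auto

    qed
  qed
qed

lemma mem6: "(p,q) \<in> elim_graph_arcs (dep_graph A pre add) ord \<Longrightarrow> (q,p) \<in> elim_graph_arcs (dep_graph A pre add) ord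
  \<Longrightarrow> p\<in>X \<Longrightarrow> q\<in>X \<Longrightarrow> Normal FAtom {Dep p q, Dep q p} {FAtom} \<in> Pc X A pre add G ord"
  unfolding Pc_def Let_def by (rule UnI2) blast
lemma mem5: "k < length ord - 1 \<Longrightarrow> (p,q) \<in> step_fill (dep_graph A pre add) ord k
  \<Longrightarrow> Normal (Dep p q) {Dep p (ord ! k), Dep (ord ! k) q} {} \<in> Pc X A pre add G ord"
  unfolding Pc_def Let_def by (rule UnI1, rule UnI2) blast
lemma headF: "r \<in> Pc X A pre add G ord \<Longrightarrow> rule_head r = FAtom \<Longrightarrow> \<exists>p q. r = Normal FAtom {Dep p q, Dep q p} {FAtom}"
  unfolding Pc_def Let_def by auto
lemma headD: "r \<in> Pc X A pre add G ord \<Longrightarrow> rule_head r = Dep p q \<Longrightarrow>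
   (p,q) \<in> dep_graph A pre add \<or> (\<exists>k. k < length ord - 1 \<and> (p,q) \<in> step_fill (dep_graph A pre add) ord k)"
  unfolding Pc_def Let_def by auto

definition pos_in :: "'x list \<Rightarrow> 'x \<Rightarrow> nat" where
  "pos_in ord x = (THE i. i < length ord \<and> ord ! i = x)"

lemma pos_in_nth: "distinct ord \<Longrightarrow> i < length ord \<Longrightarrow> pos_in ord (ord ! i) = i"
  unfolding pos_in_def by (rule the_equality) (auto simp: nth_eq_iff_index_eq)

lemma pos_in_set: "distinct ord \<Longrightarrow> x \<in> set ord \<Longrightarrow> pos_in ord x < length ord \<and> ord ! pos_in ord x = x"
  by (metis in_set_conv_nth pos_in_nth)

theorem mainTheorem4:
  fixes X :: "'x set" and A :: "'a set" and pre add :: "'a \<Rightarrow> 'x set"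
    and G :: "'x set" and ord :: "'x list" and M :: "('x, 'a) atom set"
  assumes "finite X" and "finite A"
    and "\<forall>a\<in>A. pre a \<subseteq> X \<and> add a \<subseteq> X"
    and "G \<subseteq> X"
    and "distinct ord" and "set ord = X"
    and "supported_model (Pc X A pre add G ord) M"
  shows "acyclic {(p, q). p \<in> X \<and> q \<in> X \<and> Dep p q \<in> M}"
proof -
  define P where "P = Pc X A pre add G ord"
  define E where "E = dep_graph A pre add"
  define Es where "Es = elim_graph_arcs E ord"
  note d = assms(5)
  have sm: "is_model P M \<and> M = rule_head ` supporting_rules P M"
    using assms(7) unfolding supported_model_def P_def .
  note model = conjunct1[OF sm] and sup = conjunct2[OF sm]
  have EX: "E \<subseteq> set ord \<times> set ord" using assms(3,6) unfolding E_def dep_graph_def by auto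
  have supE: "\<exists>r \<in> supporting_rules P M. rule_head r = t" if "t \<in> M" for t
  proof -
    have "t \<in> rule_head ` supporting_rules P M" using that by (subst sup[symmetric])
    then show ?thesis by blast
  qed
  have fA: "FAtom \<notin> M"
  proof
    assume "FAtom \<in> M"
    then obtain r where r: "r \<in> supporting_rules P M" "rule_head r = FAtom" using supE by blast
    then have rP: "r \<in> P" and rs: "(\<exists>h pos neg. r = Normal h pos neg \<and> sat_body M pos neg)
           \<or> (\<exists>h pos neg. r = Choice h pos neg \<and> sat_body M pos neg \<and> h \<in> M)"
      unfolding supporting_rules_def by auto
    obtain p q where "r = Normal FAtom {Dep p q, Dep q p} {FAtom}" using headF rP r(2) unfolding P_def by blast
    then show False using rs \<open>FAtom \<in> M\<close> unfolding sat_body_def by auto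
  qed
  have depEs: "(p,q) \<in> Es" if dq: "Dep p q \<in> M" for p q
  proof -
    obtain r where r: "r \<in> supporting_rules P M" "rule_head r = Dep p q" using supE[OF dq] by blast
    have rP: "r \<in> Pc X A pre add G ord" using r(1) unfolding supporting_rules_def P_def by blast
    have "(p,q) \<in> E \<or> (\<exists>k. k < length ord - 1 \<and> (p,q) \<in> step_fill E ord k)"
      using headD[OF rP r(2)] unfolding E_def .
    then show ?thesis unfolding Es_def elim_graph_arcs_def by auto
  qed
  have useM: "h \<in> M" if "Normal h pos neg \<in> P" "pos \<subseteq> M" "neg \<inter> M = {}" for h pos neg
    using model that unfolding is_model_def sat_body_def by blast
  have no2: "False" if "p \<in> X" "q \<in> X" "Dep p q \<in> M" "Dep q p \<in> M" for p q
  proof -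
    have e: "(p,q) \<in> Es" "(q,p) \<in> Es" using depEs that(3,4) by auto
    have "Normal FAtom {Dep p q, Dep q p} {FAtom} \<in> P"
      using mem6[OF e[unfolded Es_def E_def] that(1,2)] unfolding P_def .
    moreover have "{Dep p q, Dep q p} \<subseteq> M" "{FAtom} \<inter> M = {}" using that(3,4) fA by auto
    ultimately have "FAtom \<in> M" by (rule useM)
    then show False using fA by simp
  qed
  let ?R = "{(p, q). p \<in> X \<and> q \<in> X \<and> Dep p q \<in> M}"
  let ?pos = "pos_in ord"
  show ?thesis
  proof (rule acyclic_abs[of ?R X ?pos])
    show "?R \<subseteq> X \<times> X" by auto
    show "inj_on ?pos X"
    proof (rule inj_onI)
      fix a b assume ab: "a \<in> X" "b \<in> X" "?pos a = ?pos b"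
      have "ord ! ?pos a = a" "ord ! ?pos b = b" using pos_in_set[OF d] ab(1,2) assms(6) by auto
      then show "a = b" using ab(3) by metis
    qed
    show "\<And>x. (x,x) \<notin> ?R" using no2 by blast
    show "\<And>x y. (x,y)\<in>?R \<Longrightarrow> (y,x)\<in>?R \<Longrightarrow> False" using no2 by blast
    fix x v y assume xv: "(x,v) \<in> ?R" and vy: "(v,y) \<in> ?R" and xy: "x \<noteq> y"
      and px: "?pos v < ?pos x" and py: "?pos v < ?pos y"
    have X: "x \<in> set ord" "v \<in> set ord" "y \<in> set ord" using xv vy assms(6) by auto
    obtain k where vk: "k < length ord" "v = ord ! k" using X(2) by (metis in_set_conv_nth)
    have pv: "?pos v = k" using pos_in_nth[OF d vk(1)] vk(2) by simp
    have xl: "?pos x < length ord" "?pos y < length ord" using pos_in_set[OF d X(1)] pos_in_set[OF d X(3)] by auto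
    have k1: "k < length ord - 1" using px xl pv by linarith
    have inD: "z \<in> set (drop k ord)" if "z \<in> set ord" "k \<le> ?pos z" for z
    proof -
      have pz: "?pos z < length ord" "ord ! ?pos z = z" using pos_in_set[OF d that(1)] by auto
      show ?thesis using nth_in_drop[OF d pz(1), of k] pz(2) that(2) by simp
    qed
    have vD: "v \<in> set (drop k ord)" using inD[OF X(2)] pv by simp
    have xD: "x \<in> set (drop k ord)" "y \<in> set (drop k ord)" using inD[OF X(1)] inD[OF X(3)] px py pv by auto
    have e1: "(x,v) \<in> elim_graph_arcs E ord" using depEs xv unfolding Es_def by auto
    have e2: "(v,y) \<in> elim_graph_arcs E ord" using depEs vy unfolding Es_def by auto
    have g1: "(x,v) \<in> elim_seq E ord k" using key[OF EX d vk(1) e1 xD(1) vD disjI2[OF vk(2)]] .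
    have g2: "(v,y) \<in> elim_seq E ord k" using key[OF EX d vk(1) e2 vD xD(2) disjI1[OF vk(2)]] .
    have g1': "(x, ord ! k) \<in> elim_seq E ord k" using g1 vk(2) by simp
    have g2': "(ord ! k, y) \<in> elim_seq E ord k" using g2 vk(2) by simp
    have sf: "(x,y) \<in> step_fill E ord k"
      unfolding step_fill_def fill_in_def using g1' g2' xy by simp
    have "Normal (Dep x y) {Dep x (ord ! k), Dep (ord ! k) y} {} \<in> P"
      using mem5[OF k1 sf[unfolded E_def]] unfolding P_def .
    moreover have "{Dep x (ord ! k), Dep (ord ! k) y} \<subseteq> M" using xv vy vk(2) by simp
    ultimately have "Dep x y \<in> M" using useM by blast
    then show "(x,y) \<in> ?R" using X assms(6) by auto
  qed
qed

end
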